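(* Let $T$ be an invertible operator in $\mathcal D(\mathcal P_n)$. Then $$K_H(T)=\max\{\varrho[T\phi_n],\varrho[T^{-1}\phi_n]\}=\max\bigl\{d_H(Z(\phi_n),Z(T\phi_n)),\,d_H(Z(T^{-1}\phi_n),Z(\phi_n))\bigr\}.$$
   Context: Let $n\ge 1$ be an integer and $\mathcal P_n$ the complex vector space of polynomials in one complex variable of degree at most $n$; $\phi_k(z)=z^k/k!$. $D$ is differentiation on $\mathcal P_n$, $I$ the identity, and $\mathcal D(\mathcal P_n)$ the linear span of $I,D,\dots,D^n$. For a nonzero $f$, $Z(f)$ is the multiset of roots of $f$ (with multiplicity; empty for nonzero constants); $Z(0)=\mathbb C$. For nonconstant $f$, $\varrho[f]=\max\{|u|:u\in Z(f)\}$. For finite nonempty $A,B\subset\mathbb C$, $d_h(A,B)=\max_{y\in B}\min_{x\in A}|x-y|$ and $d_H(A,B)=\max\{d_h(A,B),d_h(B,A)\}$, with conventions: for $d\in\{d_h,d_H\}$, $d(\emptyset,\emptyset)=0$, $d(A,\emptyset)=d(\emptyset,A)=+\infty$ for $A\ne\emptyset$, and $d(A,B)=0$ if one of $A,B$ equals $\mathbb C$ and the other is nonempty. $K_H(T)=\sup_{f\in\mathcal P_n}d_H(Z(f),Z(Tf))$. *)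

theory Defs
  imports "HOL-Analysis.Analysis" "HOL-Computational_Algebra.Polynomial" "HOL-Library.Extended_Real"
begin

definition Pn :: "nat \<Rightarrow> complex poly set" where
  "Pn n = {p. degree p \<le> n}"

definition phi :: "nat \<Rightarrow> complex poly" where
  "phi k = monom (1 / of_nat (fact k)) k"

text \<open>The operator sum_{k=0}^n a_k D^k; the span D(P_n) consists exactly of these.\<close>
definition diffop :: "nat \<Rightarrow> (nat \<Rightarrow> complex) \<Rightarrow> complex poly \<Rightarrow> complex poly" where
  "diffop n a f = (\<Sum>k\<le>n. smult (a k) ((pderiv ^^ k) f))"

text \<open>Zero set (underlying set of the root multiset); Z 0 = UNIV automatically,
  nonzero constants give the empty set.\<close>
definition Z :: "complex poly \<Rightarrow> complex set" where
  "Z f = {x. poly f x = 0}"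

text \<open>varrho[f] = max modulus of a root, for nonconstant f.\<close>
definition rho :: "complex poly \<Rightarrow> real" where
  "rho f = Max (norm ` Z f)"

definition d_h :: "complex set \<Rightarrow> complex set \<Rightarrow> ereal" where
  "d_h A B =
     (if A = {} \<and> B = {} then 0
      else if A = {} \<or> B = {} then \<infinity>
      else if A = UNIV \<or> B = UNIV then 0
      else ereal (Max ((\<lambda>y. Min ((\<lambda>x. cmod (x - y)) ` A)) ` B)))"

definition d_H :: "complex set \<Rightarrow> complex set \<Rightarrow> ereal" where
  "d_H A B = max (d_h A B) (d_h B A)"

definition K_H :: "nat \<Rightarrow> (complex poly \<Rightarrow> complex poly) \<Rightarrow> ereal" where
  "K_H n T = (SUP f\<in>Pn n. d_H (Z f) (Z (T f)))"

end

theory Submission imports Defs "HOL-Computational_Algebra.Fundamental_Theorem_Algebra" "HOL-Computational_Algebra.Formal_Power_Series" begin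

lemma dk_add: "(pderiv ^^ k) (p + q) = (pderiv ^^ k) p + (pderiv ^^ k) (q::complex poly)"
  by (induction k) (auto simp: pderiv_add)
lemma dk_diff: "(pderiv ^^ k) (p - q) = (pderiv ^^ k) p - (pderiv ^^ k) (q::complex poly)"
  by (induction k) (auto simp: pderiv_diff)
lemma dk_smult: "(pderiv ^^ k) (smult c p) = smult c ((pderiv ^^ k) (p::complex poly))"
  by (induction k) (auto simp: pderiv_smult)
lemma dk_sum: "(pderiv ^^ k) (\<Sum>i\<in>I. f i) = (\<Sum>i\<in>I. (pderiv ^^ k) (f i :: complex poly))"
  by (rule higher_pderiv_sum)
lemma dk_zero_poly[simp]: "(pderiv ^^ k) (0::complex poly) = 0"
  by (induction k) auto
lemma dk_Suc': "(pderiv ^^ Suc k) p = (pderiv ^^ k) (pderiv p)"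
  by (simp add: funpow_Suc_right del: funpow.simps)
lemma dk_degree: "degree ((pderiv ^^ k) (p::complex poly)) = degree p - k"
  by (induction k arbitrary: p) (auto simp: dk_Suc' degree_pderiv simp del: funpow.simps)
lemma dk_vanish: "degree (p::complex poly) < k \<Longrightarrow> (pderiv ^^ k) p = 0"
proof (induction k arbitrary: p)
  case 0 then show ?case by simp
next
  case (Suc k)
  show ?case
  proof (cases "degree p = 0")
    case True
    then have "pderiv p = 0" by (simp add: pderiv_eq_0_iff)
    then show ?thesis by (simp add: dk_Suc' del: funpow.simps)
  next
    case False
    then have "degree (pderiv p) < k" using Suc.prems by (simp add: degree_pderiv)
    then show ?thesis using Suc.IH by (simp add: dk_Suc' del: funpow.simps)
  qed
qed

lemma dk_lin_mult:
  assumes X: "pderiv X = 1"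
  shows "(pderiv ^^ j) (X * P) = X * (pderiv ^^ j) P + smult (of_nat j) ((pderiv ^^ (j-1)) (P::complex poly))"
proof (induction j)
  case 0 then show ?case by simp
next
  case (Suc j)
  have "(pderiv ^^ Suc j) (X * P) = pderiv (X * (pderiv ^^ j) P + smult (of_nat j) ((pderiv ^^ (j-1)) P))"
    using Suc by simp
  also have "\<dots> = X * (pderiv ^^ Suc j) P + smult (of_nat (Suc j)) ((pderiv ^^ j) P)"
  proof (cases j)
    case 0 then show ?thesis by (simp add: pderiv_add pderiv_mult X)
  next
    case (Suc i)
    then show ?thesis by (simp add: pderiv_add pderiv_mult pderiv_smult X poly_eq_iff algebra_simps)
  qed
  finally show ?case by simp
qed

definition Bp :: "nat \<Rightarrow> complex poly \<Rightarrow> complex poly \<Rightarrow> complex poly" where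
  "Bp N P G = (\<Sum>k\<le>N. smult ((-1)^k) ((pderiv ^^ (N-k)) P * (pderiv ^^ k) G))"

definition AG :: "nat \<Rightarrow> complex poly \<Rightarrow> complex poly \<Rightarrow> complex poly" where
  "AG N X G = smult (of_nat (Suc N)) G - X * pderiv G"

lemma dk_AG:
  assumes X: "pderiv X = 1"
  shows "(pderiv ^^ k) (AG N X G) =
   smult (of_nat (Suc N) - of_nat k) ((pderiv ^^ k) G) - X * (pderiv ^^ Suc k) G"
proof -
  have "(pderiv ^^ k) (pderiv G) = (pderiv ^^ Suc k) G" by (simp add: dk_Suc' del: funpow.simps)
  moreover have "smult (of_nat k) ((pderiv ^^ (k-1)) (pderiv G)) = smult (of_nat k) ((pderiv ^^ k) G)"
    by (cases k) (auto simp: dk_Suc' simp del: funpow.simps)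
  ultimately show ?thesis
    unfolding AG_def dk_diff dk_smult dk_lin_mult[OF X] by (simp add: algebra_simps smult_diff_left)
qed

lemma Bp_step:
  assumes "degree P1 \<le> N" and X: "pderiv X = 1"
  shows "Bp (Suc N) (X * P1) G = Bp N P1 (AG N X G)"
proof -
  let ?X = "X"
  define Pd where "Pd j = (pderiv ^^ j) P1" for j
  define Gd where "Gd j = (pderiv ^^ j) G" for j
  have P0: "Pd (Suc N) = 0" unfolding Pd_def using assms by (intro dk_vanish) auto
  have "Bp (Suc N) (?X * P1) G =
     (\<Sum>k\<le>Suc N. smult ((-1)^k) (?X * Pd (Suc N - k) * Gd k))
   + (\<Sum>k\<le>Suc N. smult ((-1)^k * of_nat (Suc N - k)) (Pd (N - k) * Gd k))"
    unfolding Bp_def dk_lin_mult[OF X] Pd_def Gd_def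
    by (simp add: sum.distrib[symmetric] Suc_diff_le) (intro sum.cong refl, simp add: poly_eq_iff algebra_simps)
  also have "(\<Sum>k\<le>Suc N. smult ((-1)^k * of_nat (Suc N - k)) (Pd (N - k) * Gd k))
      = (\<Sum>k\<le>N. smult ((-1)^k * of_nat (Suc N - k)) (Pd (N - k) * Gd k))"
    by simp
  also have "(\<Sum>k\<le>Suc N. smult ((-1)^k) (?X * Pd (Suc N - k) * Gd k))
      = (\<Sum>k\<le>N. smult ((-1)^Suc k) (?X * Pd (N - k) * Gd (Suc k)))"
    by (subst sum.atMost_Suc_shift) (simp add: P0)
  finally have L: "Bp (Suc N) (?X * P1) G = (\<Sum>k\<le>N. smult ((-1)^Suc k) (?X * Pd (N - k) * Gd (Suc k)))
      + (\<Sum>k\<le>N. smult ((-1)^k * of_nat (Suc N - k)) (Pd (N - k) * Gd k))" .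
  have R: "Bp N P1 (AG N X G) = (\<Sum>k\<le>N. smult ((-1)^Suc k) (?X * Pd (N - k) * Gd (Suc k)))
      + (\<Sum>k\<le>N. smult ((-1)^k * of_nat (Suc N - k)) (Pd (N - k) * Gd k))"
    unfolding Bp_def dk_AG[OF X] sum.distrib[symmetric]
  proof (rule sum.cong[OF refl])
    fix k assume "k \<in> {..N}"
    then have ofn: "of_nat (Suc N - k) = (of_nat (Suc N) - of_nat k :: complex)" by (simp add: of_nat_diff)
    show "smult ((- 1) ^ k) ((pderiv ^^ (N - k)) P1 * (smult (of_nat (Suc N) - of_nat k) ((pderiv ^^ k) G) - X * (pderiv ^^ Suc k) G))
       = smult ((- 1) ^ Suc k) (X * Pd (N - k) * Gd (Suc k)) + smult ((- 1) ^ k * of_nat (Suc N - k)) (Pd (N - k) * Gd k)"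
      by (simp only: Pd_def Gd_def ofn) (simp add: poly_eq_iff algebra_simps)
  qed
  show ?thesis using L R by simp
qed


lemma AG_degree:
  assumes "degree G \<le> Suc N"
  shows "degree (AG N [:-u,1:] G) \<le> N"
proof (rule degree_le, intro allI impI)
  fix i assume i: "N < i"
  have c0: "coeff G j = 0" if "Suc N < j" for j using assms that by (intro coeff_eq_0) auto
  show "coeff (AG N [:-u,1:] G) i = 0"
  proof (cases "i = Suc N")
    case True
    then show ?thesis using c0[of "Suc (Suc N)"]
      by (simp add: AG_def coeff_pderiv algebra_simps)
  next
    case False
    then have "Suc N < i" using i by simp
    then obtain j where j: "i = Suc j" "Suc N \<le> j" by (cases i) auto
    then show ?thesis using c0[of i] c0[of "Suc i"] c0[of "Suc j"]
      by (auto simp add: AG_def coeff_pderiv algebra_simps)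
  qed
qed

lemma poly_AG: "poly (AG N [:-u,1:] G) z = of_nat (Suc N) * poly G z - (z - u) * poly (pderiv G) z"
  by (simp add: AG_def algebra_simps)

lemma logderiv:
  fixes r :: "nat \<Rightarrow> complex"
  shows "poly (\<Prod>i<m. [:-r i,1:]) z \<noteq> 0 \<Longrightarrow>
    poly (pderiv (\<Prod>i<m. [:-r i,1:])) z = poly (\<Prod>i<m. [:-r i,1:]) z * (\<Sum>i<m. 1/(z - r i))"
proof (induction m)
  case 0 then show ?case by simp
next
  case (Suc m)
  let ?Q = "\<Prod>i<m. [:-r i,1:]"
  have ne: "poly ?Q z \<noteq> 0" "z - r m \<noteq> 0" using Suc.prems by (auto simp: algebra_simps)
  have eq: "pderiv (\<Prod>i<Suc m. [:-r i,1:]) = pderiv ?Q * [:-r m,1:] + ?Q"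
    by (simp add: pderiv_mult pderiv_pCons del: mult_pCons_right mult_pCons_left)
  have "poly (pderiv (\<Prod>i<Suc m. [:-r i,1:])) z = poly (pderiv ?Q) z * (z - r m) + poly ?Q z"
    unfolding eq poly_add poly_mult by simp
  also have "\<dots> = poly ?Q z * (\<Sum>i<m. 1/(z - r i)) * (z - r m) + poly ?Q z"
    using Suc.IH ne by simp
  also have "\<dots> = poly (\<Prod>i<Suc m. [:-r i,1:]) z * (\<Sum>i<Suc m. 1/(z - r i))"
    using ne by (simp add: field_simps)
  finally show ?case .
qed

lemma factorization:
  fixes G :: "complex poly"
  obtains r where "G = smult (lead_coeff G) (\<Prod>i<degree G. [:-r i,1:])"
  using complex_poly_decompose'[of G] by metis

lemma Fid: "(norm z ^ 2 - R ^ 2) * norm w ^ 2 - 2 * Re (z * w) + 1 = norm (z * w - 1) ^ 2 - R ^ 2 * norm (w::complex) ^ 2"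
proof -
  have a: "norm (z*w-1)^2 = Re (z*w-1)^2 + Im (z*w-1)^2" by (rule cmod_power2)
  have b: "norm z^2 = Re z^2 + Im z^2" by (rule cmod_power2)
  have c: "norm w^2 = Re w^2 + Im w^2" by (rule cmod_power2)
  show ?thesis unfolding a b c by (simp add: algebra_simps power2_eq_square)
qed

lemma Fval:
  assumes "z \<noteq> (x::complex)"
  shows "(norm z ^ 2 - R ^ 2) * norm (1/(z-x)) ^ 2 - 2 * Re (z * (1/(z-x))) + 1 = (norm x ^ 2 - R ^ 2) / norm (z - x) ^ 2"
proof -
  have "z * (1/(z-x)) - 1 = x / (z - x)" using assms by (simp add: field_simps)
  then show ?thesis unfolding Fid by (simp add: norm_divide power_divide diff_divide_distrib)
qed


lemma laguerre:
  fixes G :: "complex poly"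
  assumes G0: "G \<noteq> 0" and dG: "degree G \<le> Suc N"
    and roots: "\<And>x. poly G x = 0 \<Longrightarrow> R < norm x"
    and u: "norm u \<le> R" and z: "norm z \<le> R"
  shows "poly (AG N [:-u,1:] G) z \<noteq> 0"
proof
  assume H: "poly (AG N [:-u,1:] G) z = 0"
  define m where "m = degree G"
  define c where "c = lead_coeff G"
  obtain r where Gf: "G = smult c (\<Prod>i<m. [:-r i,1:])"
    using factorization[of G] unfolding m_def c_def by metis
  let ?Q = "\<Prod>i<m. [:-r i,1:]"
  have c0: "c \<noteq> 0" using G0 by (simp add: c_def)
  have Gz: "poly G z \<noteq> 0" using roots[of z] z by force
  have Qz: "poly ?Q z \<noteq> 0" using Gz Gf by auto
  have rr: "R < norm (r i)" if "i < m" for i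
  proof -
    have "poly ?Q (r i) = 0" using that by (auto simp: poly_prod)
    then show ?thesis using roots[of "r i"] Gf by simp
  qed
  define S where "S = (\<Sum>i<m. 1/(z - r i))"
  have dG': "poly (pderiv G) z = poly G z * S"
    using logderiv[OF Qz] Gf by (simp add: pderiv_smult S_def)
  from H have "of_nat (Suc N) * poly G z = (z - u) * (poly G z * S)"
    unfolding poly_AG dG' by simp
  then have eq: "of_nat (Suc N) = (z - u) * S" using Gz
    by (metis (no_types, lifting) mult.assoc mult.commute mult_cancel_right)
  have zu: "z \<noteq> u"
  proof
    assume "z = u"
    then have "(of_nat (Suc N)::complex) = 0" using eq by simp
    then show False by (metis of_nat_eq_0_iff nat.distinct(1))
  qed
  define F where "F w = (norm z ^ 2 - R ^ 2) * norm w ^ 2 - 2 * Re (z * w) + 1" for w :: complex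
  define \<alpha> where "\<alpha> = norm z ^ 2 - R ^ 2"
  have al: "\<alpha> \<le> 0" unfolding \<alpha>_def using z norm_ge_zero[of z]
    using power_mono[OF z norm_ge_zero, of 2] by simp
  define w where "w i = 1 / (z - r i)" for i
  define wu where "wu = 1 / (z - u)"
  define M where "M = real (Suc N)"
  have Mpos: "M > 0" unfolding M_def by simp
  have mM: "real m \<le> M" using dG unfolding M_def m_def by simp
  have Fw: "F (w i) > 0" if "i < m" for i
  proof -
    have ne: "z \<noteq> r i" using rr[OF that] z by auto
    have "F (w i) = (norm (r i) ^ 2 - R ^ 2) / norm (z - r i) ^ 2"
      unfolding F_def w_def using Fval[OF ne] by simp
    moreover have "norm (r i) ^ 2 > R ^ 2"
    proof -
      have "0 \<le> R" using z norm_ge_zero[of z] by linarith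
      then show ?thesis using rr[OF that] by (intro power_strict_mono) auto
    qed
    ultimately show ?thesis using ne by simp
  qed
  have Fu: "F wu \<le> 0"
  proof -
    have "F wu = (norm u ^ 2 - R ^ 2) / norm (z - u) ^ 2"
      unfolding F_def wu_def using Fval[OF zu] by simp
    moreover have "norm u ^ 2 \<le> R ^ 2"
      using u norm_ge_zero[of u] by (simp add: power_mono)
    ultimately show ?thesis by (simp add: divide_nonpos_nonneg)
  qed
  have Sw: "S = (\<Sum>i<m. w i)" unfolding S_def w_def by simp
  have Swu: "S = of_real M * wu" using eq zu unfolding wu_def M_def by (simp add: field_simps)
  have sumF: "(\<Sum>i<m. F (w i)) = \<alpha> * (\<Sum>i<m. norm (w i) ^ 2) - 2 * Re (z * S) + real m"
  proof -
    have "Re (z*S) = (\<Sum>i<m. Re (z * w i))" unfolding Sw by (simp add: sum_distrib_left Re_sum)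
    then show ?thesis unfolding F_def \<alpha>_def by (simp add: sum.distrib sum_subtractf sum_distrib_left)
  qed
  have MFu: "M * F wu = \<alpha> * norm S ^ 2 / M - 2 * Re (z * S) + M"
  proof -
    have n: "norm S ^ 2 = M ^ 2 * norm wu ^ 2" using Swu Mpos by (simp add: norm_mult power_mult_distrib)
    have r: "Re (z * S) = M * Re (z * wu)" unfolding Swu by (simp add: mult.left_commute right_diff_distrib)
    show ?thesis unfolding F_def \<alpha>_def n r using Mpos by (simp add: field_simps power2_eq_square)
  qed
  have CS1: "norm S \<le> (\<Sum>i<m. norm (w i))" unfolding Sw by (rule norm_sum)
  have CS2: "(\<Sum>i<m. norm (w i)) ^ 2 \<le> (\<Sum>i<m. norm (w i) ^ 2) * real m"
    using sum_squared_le_sum_of_squares[of "\<lambda>i. norm (w i)" "{..<m}"] by simp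
  have "norm S ^ 2 \<le> (\<Sum>i<m. norm (w i) ^ 2) * M"
  proof -
    have "norm S ^ 2 \<le> (\<Sum>i<m. norm (w i)) ^ 2" using CS1 by (simp add: power_mono)
    also have "\<dots> \<le> (\<Sum>i<m. norm (w i) ^ 2) * real m" by (rule CS2)
    also have "\<dots> \<le> (\<Sum>i<m. norm (w i) ^ 2) * M" using mM by (intro mult_left_mono) (auto intro: sum_nonneg)
    finally show ?thesis .
  qed
  then have "norm S ^ 2 / M \<le> (\<Sum>i<m. norm (w i) ^ 2)" using Mpos by (simp add: divide_le_eq)
  then have A: "\<alpha> * (\<Sum>i<m. norm (w i) ^ 2) \<le> \<alpha> * norm S ^ 2 / M"
    using al by (metis mult_left_mono_neg times_divide_eq_right)
  have "(\<Sum>i<m. F (w i)) + (M - real m) > 0"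
  proof (cases "m = 0")
    case True then show ?thesis using Mpos by simp
  next
    case False
    then have "(\<Sum>i<m. F (w i)) > 0" using Fw by (intro sum_pos) auto
    then show ?thesis using mM by simp
  qed
  then have "M * F wu > 0" using A sumF MFu by linarith
  then show False using Fu Mpos by (simp add: zero_less_mult_iff)
qed


lemma degree_linprod: "degree (\<Prod>i<N. [:-r i,1:] :: complex poly) = N"
  by (subst degree_prod_sum_eq) auto

lemma grace:
  fixes r :: "nat \<Rightarrow> complex"
  shows "G \<noteq> 0 \<Longrightarrow> degree G \<le> N \<Longrightarrow> (\<forall>i<N. norm (r i) \<le> R) \<Longrightarrow> 0 \<le> R \<Longrightarrow>
     (\<forall>x. poly G x = 0 \<longrightarrow> R < norm x) \<Longrightarrow> poly (Bp N (\<Prod>i<N. [:-r i,1:]) G) 0 \<noteq> 0"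
proof (induction N arbitrary: G)
  case 0
  then show ?case by (auto simp: Bp_def)
next
  case (Suc N)
  let ?X = "[:-r N,1:] :: complex poly"
  let ?P1 = "\<Prod>i<N. [:-r i,1:] :: complex poly"
  let ?A = "AG N ?X G"
  have X: "pderiv ?X = 1" by (simp add: pderiv_pCons)
  have eqP: "(\<Prod>i<Suc N. [:-r i,1:]) = ?X * ?P1" by (simp add: mult.commute)
  have st: "Bp (Suc N) (?X * ?P1) G = Bp N ?P1 ?A"
    by (rule Bp_step[OF _ X]) (simp add: degree_linprod)
  have uR: "norm (r N) \<le> R" using Suc.prems by auto
  have lag: "poly ?A x \<noteq> 0" if "norm x \<le> R" for x
    using laguerre[of G N R "r N" x] Suc.prems uR that by auto
  have A0: "?A \<noteq> 0" using lag[of 0] Suc.prems by auto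
  have dA: "degree ?A \<le> N" using AG_degree Suc.prems by auto
  have rA: "\<forall>x. poly ?A x = 0 \<longrightarrow> R < norm x" using lag by force
  have "poly (Bp N ?P1 ?A) 0 \<noteq> 0"
    using Suc.IH[OF A0 dA] Suc.prems rA by auto
  then show ?case unfolding eqP st .
qed

lemma phi_deriv: "pderiv (phi (Suc m)) = phi m" "pderiv (phi 0) = 0"
proof -
  have "of_nat (Suc m) * (1 / of_nat (fact (Suc m))) = (1 / of_nat (fact m) :: complex)"
  proof -
    have f: "(of_nat (fact (Suc m))::complex) = of_nat (Suc m) * of_nat (fact m)" by (metis fact_Suc of_nat_mult of_nat_id)
    have nz: "(of_nat (fact m)::complex) \<noteq> 0" "(of_nat (Suc m)::complex) \<noteq> 0"
      by (simp_all only: of_nat_eq_0_iff) auto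
    show ?thesis unfolding f using nz by (simp add: field_simps del: of_nat_Suc of_nat_fact)
  qed
  then show "pderiv (phi (Suc m)) = phi m" unfolding phi_def pderiv_monom by simp
  show "pderiv (phi 0) = 0" unfolding phi_def by (simp add: pderiv_monom)
qed

lemma dk_phi: "(pderiv ^^ j) (phi m) = (if j \<le> m then phi (m - j) else 0)"
proof (induction j arbitrary: m)
  case 0 then show ?case by simp
next
  case (Suc j)
  show ?case
  proof (cases m)
    case 0 then show ?thesis by (simp add: dk_Suc' phi_deriv del: funpow.simps)
  next
    case (Suc m') then show ?thesis using Suc.IH by (simp add: dk_Suc' phi_deriv del: funpow.simps)
  qed
qed

lemma poly_phi0: "poly (phi m) 0 = (if m = 0 then 1 else 0)"
  by (simp add: phi_def poly_monom)

lemma diffop_phi: "diffop n c (phi n) = (\<Sum>j\<le>n. smult (c j) (phi (n - j)))"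
  unfolding diffop_def by (intro sum.cong refl) (simp add: dk_phi)

lemma dk_P0:
  assumes "k \<le> n"
  shows "poly ((pderiv ^^ (n - k)) (diffop n c (phi n))) 0 = c k"
proof -
  have "poly ((pderiv ^^ (n - k)) (diffop n c (phi n))) 0 = (\<Sum>j\<le>n. c j * poly ((pderiv ^^ (n - k)) (phi (n - j))) 0)"
    unfolding diffop_phi dk_sum dk_smult by (simp add: poly_sum)
  also have "\<dots> = (\<Sum>j\<le>n. if j = k then c j else 0)"
    using assms by (intro sum.cong refl) (auto simp: dk_phi poly_phi0)
  also have "\<dots> = c k" using assms by simp
  finally show ?thesis .
qed

lemma dk_pcomp: "(pderiv ^^ k) (pcompose f [:w,-1:]) = smult ((-1)^k) (pcompose ((pderiv ^^ k) f) [:w,-1:])"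
proof (induction k)
  case 0 then show ?case by simp
next
  case (Suc k)
  then show ?case by (simp add: pderiv_smult pderiv_pcompose pderiv_pCons mult.commute)
qed

lemma Bp_connect:
  assumes "n \<ge> 0"
  shows "poly (Bp n (diffop n c (phi n)) (pcompose f [:w,-1:])) 0 = poly (diffop n c f) w"
proof -
  have "poly (Bp n (diffop n c (phi n)) (pcompose f [:w,-1:])) 0
     = (\<Sum>k\<le>n. (-1)^k * (c k * ((-1)^k * poly ((pderiv ^^ k) f) w)))"
    unfolding Bp_def poly_sum
    by (intro sum.cong refl) (simp add: dk_P0 dk_pcomp poly_pcompose)
  also have "\<dots> = (\<Sum>k\<le>n. c k * poly ((pderiv ^^ k) f) w)"
    by (intro sum.cong refl) (simp add: algebra_simps flip: power_add)
  also have "\<dots> = poly (diffop n c f) w" unfolding diffop_def by (simp add: poly_sum)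
  finally show ?thesis .
qed


lemma diffop_degree: "degree (diffop n c f) \<le> degree f"
  unfolding diffop_def
  by (intro degree_sum_le) (auto intro: order.trans[OF degree_smult_le] simp: dk_degree)

lemma diffop_zero[simp]: "diffop n c 0 = 0"
  by (simp add: diffop_def)

lemma degP:
  assumes "c 0 \<noteq> 0"
  shows "degree (diffop n c (phi n)) = n"
proof (rule antisym)
  show "degree (diffop n c (phi n)) \<le> n"
    unfolding diffop_phi
    by (intro degree_sum_le) (auto intro!: order.trans[OF degree_smult_le] order.trans[OF degree_monom_le] simp: phi_def)
  have "coeff (diffop n c (phi n)) n = (\<Sum>j\<le>n. if j = 0 then c j * (1 / of_nat (fact n)) else 0)"
    unfolding diffop_phi coeff_sum
    by (intro sum.cong refl) (auto simp: coeff_monom phi_def)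
  also have "\<dots> = c 0 / of_nat (fact n)" by simp
  finally have "coeff (diffop n c (phi n)) n \<noteq> 0" using assms by simp
  then show "n \<le> degree (diffop n c (phi n))" by (rule le_degree)
qed

lemma rho_ge:
  assumes "p \<noteq> 0" "poly p x = 0"
  shows "norm x \<le> rho p"
  unfolding rho_def Z_def using assms poly_roots_finite[OF assms(1)]
  by (intro Max_ge) auto

lemma lemmaA:
  assumes n1: "n \<ge> 1" and c0: "c 0 \<noteq> 0" and f0: "f \<noteq> 0" and df: "degree f \<le> n"
    and w: "poly (diffop n c f) w = 0"
  shows "\<exists>z. poly f z = 0 \<and> cmod (z - w) \<le> rho (diffop n c (phi n))"
proof (rule ccontr)
  assume "\<not> ?thesis"
  then have far: "\<And>z. poly f z = 0 \<Longrightarrow> rho (diffop n c (phi n)) < cmod (z - w)" by force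
  define P where "P = diffop n c (phi n)"
  define R where "R = rho P"
  have dP: "degree P = n" using degP[of c n, OF c0] by (simp add: P_def)
  then have P0: "P \<noteq> 0" using n1 by auto
  obtain r where Pf: "P = smult (lead_coeff P) (\<Prod>i<n. [:-r i,1:])"
    using factorization[of P] dP by metis
  have lc: "lead_coeff P \<noteq> 0" using P0 by simp
  have rR: "\<forall>i<n. norm (r i) \<le> R"
  proof (intro allI impI)
    fix i assume "i < n"
    then have "poly P (r i) = 0" by (subst Pf) (auto simp: poly_prod)
    then show "norm (r i) \<le> R" unfolding R_def by (rule rho_ge[OF P0])
  qed
  have R0: "0 \<le> R" proof -
    have "norm (r 0) \<le> R" using rR n1 by auto
    then show ?thesis using norm_ge_zero[of "r 0"] by linarith
  qed
  define G where "G = pcompose f [:w,-1:]"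
  have pG: "poly G x = poly f (w - x)" for x by (simp add: G_def poly_pcompose)
  have G0: "G \<noteq> 0"
  proof
    assume "G = 0"
    then have "poly f x = 0" for x using pG[of "w - x"] by simp
    then show False using f0 poly_all_0_iff_0 by blast
  qed
  have dG: "degree G \<le> n" using df by (simp add: G_def degree_pcompose)
  have rG: "\<forall>x. poly G x = 0 \<longrightarrow> R < norm x"
  proof (intro allI impI)
    fix x assume "poly G x = 0"
    then have "poly f (w - x) = 0" by (simp add: pG)
    from far[OF this] show "R < norm x" by (simp add: R_def P_def)
  qed
  have g: "poly (Bp n (\<Prod>i<n. [:-r i,1:]) G) 0 \<noteq> 0"
    using grace[OF G0 dG rR R0 rG] .
  have "Bp n P G = smult (lead_coeff P) (Bp n (\<Prod>i<n. [:-r i,1:]) G)"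
    by (subst Pf) (simp add: Bp_def dk_smult poly_eq_iff coeff_sum sum_distrib_left algebra_simps)
  then have "poly (Bp n P G) 0 \<noteq> 0" using g lc by simp
  moreover have "poly (Bp n P G) 0 = poly (diffop n c f) w"
    unfolding P_def G_def by (rule Bp_connect) simp
  ultimately show False using w by simp
qed



lemma smult_sum_right: "smult c (\<Sum>i\<in>S. f i) = (\<Sum>i\<in>S. smult c (f i))"
  by (induction S rule: infinite_finite_induct) (auto simp: smult_add_right)

lemma diffop_comp:
  assumes dp: "degree p \<le> n"
  shows "diffop n a (diffop n b p) = (\<Sum>m\<le>n. smult (\<Sum>i\<le>m. a i * b (m - i)) ((pderiv ^^ m) p))"
proof -
  define g where "g i j = smult (a i * b j) ((pderiv ^^ (i + j)) p)" for i j
  have "diffop n a (diffop n b p) = (\<Sum>i\<le>n. \<Sum>j\<le>n. g i j)"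
    unfolding diffop_def dk_sum dk_smult g_def
    by (intro sum.cong refl) (simp add: smult_sum_right funpow_add)
  also have "\<dots> = (\<Sum>(i,j)\<in>{..n}\<times>{..n}. g i j)" by (rule sum.cartesian_product)
  also have "\<dots> = (\<Sum>(i,j)\<in>{(i,j). i + j \<le> n}. g i j)"
  proof (rule sum.mono_neutral_right)
    show "finite ({..n}\<times>{..n})" by simp
    show "{(i,j). i + j \<le> n} \<subseteq> {..n}\<times>{..n}" by auto
    show "\<forall>x\<in>{..n}\<times>{..n} - {(i,j). i + j \<le> n}. (case x of (i,j) \<Rightarrow> g i j) = 0"
      using dp by (auto simp: g_def intro!: dk_vanish)
  qed
  also have "\<dots> = (\<Sum>m\<le>n. \<Sum>i\<le>m. g i (m - i))" by (rule sum.triangle_reindex_eq)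
  also have "\<dots> = (\<Sum>m\<le>n. smult (\<Sum>i\<le>m. a i * b (m - i)) ((pderiv ^^ m) p))"
    by (intro sum.cong refl) (simp add: g_def smult_sum)
  finally show ?thesis .
qed

lemma diffop_const: "diffop n a [:c:] = [:a 0 * c:]"
proof -
  have "diffop n a [:c:] = (\<Sum>k\<le>n. if k = 0 then [:a 0 * c:] else 0)"
    unfolding diffop_def by (intro sum.cong refl) (auto simp: dk_vanish)
  then show ?thesis by simp
qed

lemma inv_op:
  assumes a0: "a 0 \<noteq> 0"
  shows "\<exists>b. b 0 \<noteq> 0 \<and> (\<forall>p. degree p \<le> n \<longrightarrow> diffop n a (diffop n b p) = p)"
proof -
  define A where "A = Abs_fps a"
  define b where "b = fps_nth (inverse A)"
  have A0: "fps_nth A 0 \<noteq> 0" using a0 by (simp add: A_def)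
  have conv: "(\<Sum>i\<le>m. a i * b (m - i)) = (if m = 0 then 1 else 0)" for m
  proof -
    have "(\<Sum>i\<le>m. a i * b (m - i)) = fps_nth (A * inverse A) m"
      by (simp add: fps_mult_nth A_def b_def atLeast0AtMost)
    also have "\<dots> = (if m = 0 then 1 else 0)" using inverse_mult_eq_1'[OF A0] by simp
    finally show ?thesis .
  qed
  have "diffop n a (diffop n b p) = p" if "degree p \<le> n" for p
  proof -
    have "diffop n a (diffop n b p) = (\<Sum>m\<le>n. if m = 0 then p else 0)"
      unfolding diffop_comp[OF that] conv by (intro sum.cong refl) auto
    then show ?thesis by simp
  qed
  moreover have "b 0 \<noteq> 0" using A0 by (simp add: b_def)
  ultimately show ?thesis by blast
qed


lemma Z_finite: "p \<noteq> 0 \<Longrightarrow> finite (Z p)"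
  unfolding Z_def by (rule poly_roots_finite)

lemma Z_not_UNIV: "p \<noteq> 0 \<Longrightarrow> Z p \<noteq> UNIV"
  using Z_finite infinite_UNIV_char_0[where 'a=complex] by metis

lemma Z_ne: "degree p \<ge> 1 \<Longrightarrow> Z p \<noteq> {}"
proof -
  assume d: "degree p \<ge> 1"
  obtain r where pf: "p = smult (lead_coeff p) (\<Prod>i<degree p. [:-r i,1:])" using factorization by metis
  have "poly p (r 0) = 0" using d by (subst pf) (auto simp: poly_prod)
  then show ?thesis unfolding Z_def by auto
qed

lemma Z_const: "degree p = 0 \<Longrightarrow> p \<noteq> 0 \<Longrightarrow> Z p = {}"
  by (elim degree_eq_zeroE) (auto simp: Z_def)

lemma Z_zero: "Z 0 = UNIV" by (simp add: Z_def)

lemma Z_phi: "n \<ge> 1 \<Longrightarrow> Z (phi n) = {0}"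
  by (auto simp: Z_def phi_def poly_monom)

lemma d_h_le:
  assumes "finite A" "finite B" "A \<noteq> {}" "B \<noteq> {}" "A \<noteq> UNIV" "B \<noteq> UNIV"
    and H: "\<forall>y\<in>B. \<exists>x\<in>A. cmod (x - y) \<le> r"
  shows "d_h A B \<le> ereal r"
proof -
  have "Max ((\<lambda>y. Min ((\<lambda>x. cmod (x - y)) ` A)) ` B) \<le> r"
  proof (subst Max_le_iff)
    show "finite ((\<lambda>y. Min ((\<lambda>x. cmod (x - y)) ` A)) ` B)" using assms by simp
    show "(\<lambda>y. Min ((\<lambda>x. cmod (x - y)) ` A)) ` B \<noteq> {}" using assms by simp
    show "\<forall>a\<in>(\<lambda>y. Min ((\<lambda>x. cmod (x - y)) ` A)) ` B. a \<le> r"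
    proof
      fix a assume "a \<in> (\<lambda>y. Min ((\<lambda>x. cmod (x - y)) ` A)) ` B"
      then obtain y where y: "y \<in> B" "a = Min ((\<lambda>x. cmod (x - y)) ` A)" by auto
      obtain x where x: "x \<in> A" "cmod (x - y) \<le> r" using H y by auto
      have "a \<le> cmod (x - y)" unfolding y(2) using assms(1) x(1) by (intro Min_le) auto
      then show "a \<le> r" using x by simp
    qed
  qed
  then show ?thesis using assms by (simp add: d_h_def)
qed

lemma singleton_not_UNIV: "{0::complex} \<noteq> UNIV"
  using infinite_UNIV_char_0[where 'a=complex] by (metis finite.emptyI finite_insert)

lemma d_h_0B:
  assumes "finite B" "B \<noteq> {}" "B \<noteq> UNIV"
  shows "d_h {0} B = ereal (Max (norm ` B))"
proof -
  have "(\<lambda>y. Min ((\<lambda>x. cmod (x - y)) ` {0})) ` B = norm ` B" by (auto simp: image_def)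
  then show ?thesis using assms singleton_not_UNIV by (simp add: d_h_def)
qed

lemma d_h_B0:
  assumes "finite B" "B \<noteq> {}" "B \<noteq> UNIV"
  shows "d_h B {0} \<le> ereal (Max (norm ` B))"
proof -
  obtain y where y: "y \<in> B" using assms by auto
  have "Min ((\<lambda>x. cmod (x - 0)) ` B) \<le> norm y" using assms y by (intro Min_le) auto
  also have "\<dots> \<le> Max (norm ` B)" using assms y by (intro Max_ge) auto
  finally show ?thesis using assms singleton_not_UNIV by (simp add: d_h_def)
qed

lemma d_H_phi:
  assumes "p \<noteq> 0" "degree p \<ge> 1"
  shows "d_H {0} (Z p) = ereal (rho p)" "d_H (Z p) {0} = ereal (rho p)"
proof -
  have f: "finite (Z p)" "Z p \<noteq> {}" "Z p \<noteq> UNIV" using assms Z_finite Z_ne Z_not_UNIV by auto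
  show "d_H {0} (Z p) = ereal (rho p)" "d_H (Z p) {0} = ereal (rho p)"
    unfolding d_H_def rho_def using d_h_0B[OF f] d_h_B0[OF f] by (auto simp: max_def)
qed


theorem mainTheorem5:
  fixes n :: nat and a :: "nat \<Rightarrow> complex"
  assumes "n \<ge> 1"
    and "bij_betw (diffop n a) (Pn n) (Pn n)"
  shows "K_H n (diffop n a) =
           ereal (max (rho (diffop n a (phi n)))
                      (rho (inv_into (Pn n) (diffop n a) (phi n))))
       \<and> K_H n (diffop n a) =
           max (d_H (Z (phi n)) (Z (diffop n a (phi n))))
               (d_H (Z (inv_into (Pn n) (diffop n a) (phi n))) (Z (phi n)))"
proof -
  note n1 = assms(1)
  let ?T = "diffop n a"
  let ?S = "inv_into (Pn n) ?T"
  have inj: "inj_on ?T (Pn n)" using assms(2) by (rule bij_betw_imp_inj_on)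
  have inPn: "degree (diffop n c p) \<le> n" if "degree p \<le> n" for c p
    using diffop_degree[of n c p] that by linarith
  have a0: "a 0 \<noteq> 0"
  proof
    assume "a 0 = 0"
    then have "?T [:1:] = ?T 0" by (simp add: diffop_const)
    moreover have "[:1:] \<in> Pn n" "0 \<in> Pn n" by (auto simp: Pn_def)
    ultimately have "[:1::complex:] = 0" using inj by (meson inj_on_eq_iff)
    then show False by simp
  qed
  obtain b where b0: "b 0 \<noteq> 0" and Tb: "\<And>p. degree p \<le> n \<Longrightarrow> ?T (diffop n b p) = p"
    using inv_op[of a n, OF a0] by blast
  have Sb: "?S p = diffop n b p" if "degree p \<le> n" for p
    using inj that by (intro inv_into_f_eq) (auto simp: Pn_def Tb inPn)
  have bT: "diffop n b (?T f) = f" if "degree f \<le> n" for f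
  proof -
    have "?T (diffop n b (?T f)) = ?T f" using Tb inPn that by blast
    then show ?thesis using inj that inPn by (auto simp: Pn_def inj_on_def)
  qed
  have T0: "?T 0 = 0" by simp
  have dphi: "degree (phi n) \<le> n" by (simp add: phi_def degree_monom_le)
  define Rt where "Rt = rho (?T (phi n))"
  define Rs where "Rs = rho (diffop n b (phi n))"
  have SRs: "rho (?S (phi n)) = Rs" using Sb[OF dphi] by (simp add: Rs_def)
  have degTp: "degree (?T (phi n)) = n" by (rule degP[of a n, OF a0])
  have degSp: "degree (diffop n b (phi n)) = n" by (rule degP[of b n, OF b0])
  have Tp0: "?T (phi n) \<noteq> 0" using degTp n1 by auto
  have Sp0: "diffop n b (phi n) \<noteq> 0" using degSp n1 by auto
  have dHt: "d_H (Z (phi n)) (Z (?T (phi n))) = ereal Rt"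
    unfolding Z_phi[OF n1] Rt_def using d_H_phi[OF Tp0] degTp n1 by simp
  have dHs: "d_H (Z (?S (phi n))) (Z (phi n)) = ereal Rs"
    unfolding Z_phi[OF n1] Rs_def Sb[OF dphi] using d_H_phi[OF Sp0] degSp n1 by simp
  have Rt0: "0 \<le> Rt"
  proof -
    obtain z where "z \<in> Z (?T (phi n))" using Z_ne degTp n1 by fastforce
    then have "norm z \<le> Rt" unfolding Rt_def Z_def using rho_ge[OF Tp0] by auto
    then show ?thesis using norm_ge_zero[of z] by linarith
  qed
  have upper: "d_H (Z f) (Z (?T f)) \<le> ereal (max Rt Rs)" if f: "f \<in> Pn n" for f
  proof -
    have df: "degree f \<le> n" using f by (simp add: Pn_def)
    consider "f = 0" | "f \<noteq> 0" "degree f = 0" | "degree f \<ge> 1" by linarith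
    then show ?thesis
    proof cases
      case 1
      then have "d_H (Z f) (Z (?T f)) = 0" by (simp add: Z_zero d_H_def d_h_def)
      then show ?thesis using Rt0 by (simp add: le_max_iff_disj)
    next
      case 2
      then obtain c where c: "f = [:c:]" "c \<noteq> 0" by (metis degree_eq_zeroE pCons_0_0)
      then have "?T f = [:a 0 * c:]" "a 0 * c \<noteq> 0" using a0 by (auto simp: diffop_const)
      then have "Z f = {}" "Z (?T f) = {}" using c by (auto simp: Z_def)
      then have "d_H (Z f) (Z (?T f)) = 0" by (simp add: d_H_def d_h_def)
      then show ?thesis using Rt0 by (simp add: le_max_iff_disj)
    next
      case 3
      then have f0: "f \<noteq> 0" by auto
      have dTf: "degree (?T f) \<ge> 1"
      proof -
        have "degree f \<le> degree (?T f)" using diffop_degree[of n b "?T f"] bT[OF df] by simp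
        then show ?thesis using 3 by simp
      qed
      then have Tf0: "?T f \<noteq> 0" by auto
      have dTf': "degree (?T f) \<le> n" using inPn[OF df] .
      have h1: "d_h (Z f) (Z (?T f)) \<le> ereal Rt"
      proof (rule d_h_le)
        show "\<forall>y\<in>Z (?T f). \<exists>x\<in>Z f. cmod (x - y) \<le> Rt"
          using lemmaA[of n a f, OF n1 a0 f0 df] unfolding Z_def Rt_def by auto
      qed (use f0 Tf0 3 dTf Z_finite Z_ne Z_not_UNIV in auto)
      have h2: "d_h (Z (?T f)) (Z f) \<le> ereal Rs"
      proof (rule d_h_le)
        show "\<forall>y\<in>Z f. \<exists>x\<in>Z (?T f). cmod (x - y) \<le> Rs"
        proof
          fix y assume "y \<in> Z f"
          then have "poly (diffop n b (?T f)) y = 0" using bT[OF df] by (simp add: Z_def)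
          from lemmaA[of n b "?T f", OF n1 b0 Tf0 dTf' this] show "\<exists>x\<in>Z (?T f). cmod (x - y) \<le> Rs"
            unfolding Z_def Rs_def by auto
        qed
      qed (use f0 Tf0 3 dTf Z_finite Z_ne Z_not_UNIV in auto)
      show ?thesis unfolding d_H_def using h1 h2
        by (metis ereal_max max.mono)
    qed
  qed
  have phiPn: "phi n \<in> Pn n" using dphi by (simp add: Pn_def)
  have SPn: "?S (phi n) \<in> Pn n" using Sb[OF dphi] inPn[OF dphi] by (simp add: Pn_def)
  have TS: "?T (?S (phi n)) = phi n" using Sb[OF dphi] Tb[OF dphi] by simp
  have K: "K_H n ?T = ereal (max Rt Rs)"
  proof (rule antisym)
    show "K_H n ?T \<le> ereal (max Rt Rs)" unfolding K_H_def using upper by (intro SUP_least) auto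
    have "ereal Rt \<le> K_H n ?T" unfolding K_H_def using phiPn dHt by (intro SUP_upper2[of "phi n"]) auto
    moreover have "ereal Rs \<le> K_H n ?T" unfolding K_H_def using SPn dHs TS
      by (intro SUP_upper2[of "?S (phi n)"]) auto
    ultimately show "ereal (max Rt Rs) \<le> K_H n ?T" by simp
  qed
  show ?thesis using K dHt dHs SRs by (simp add: Rt_def)
qed

end
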